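(* Let $(G,d(\cdot))$ be piecewise $\mathcal C^1$ with continuous reflection and suppose Assumption 2' holds with unit vectors $v_x$ and constants $r_x>0$, $0<c^1_x<1<c^2_x<\infty$, $\alpha_x>0$, $x\in\mathcal V$. Then for each $x\in\mathcal V$ there is a constant $A_x<\infty$ such that for every $r\in(0,r_x/c^2_x)$ there exists a nonnegative function $g_{x,r}\in\mathcal C^2_c(\overline G)$ such that: (1) $\mathrm{supp}[g_{x,r}]\cap\overline G\subset B_{c^2_xr}(x)\cap\overline G\subset B_{r_x}(x)\cap\overline G$; (2) $g_{x,r}(y)=1$ for each $y\in B_{c^1_xr}(x)\cap\overline G$; (3) $\sup_{y\in\overline G}|g_{x,r}(y)|\le A_x$, $\sup_{y\in\overline G}|\nabla g_{x,r}(y)|\le A_x/r$, $\sup_{y\in\overline G}\sum_{i,j=1}^J\big|\frac{\partial^2g_{x,r}(y)}{\partial y_i\partial y_j}\big|<A_x/r^2$; (4) $\langle d,\nabla g_{x,r}(y)\rangle\le0$ for all $d\in d(y)$ and $y\in\partial G$.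
   Context: Notation: $B_r(x)=\{y:|y-x|\le r\}$; $\mathrm{dist}(y,A)=\inf_{z\in A}|y-z|$; $\sigma:\mathbb R^J\to\mathbb R^{J\times N}$ continuous and $a=\sigma\sigma^T$. $\mathcal C^2_c(\overline G)$: restrictions to $\overline G$ of functions $\mathcal C^2$ on every open neighbourhood of $\overline G$ with compact support. Piecewise $\mathcal C^1$ with continuous reflection: $G=\bigcap_{i\in\mathcal I}G_i$ nonempty domain, $\mathcal I$ finite, $G_i=\{\phi^i>0\}$, $\partial G_i=\{\phi^i=0\}$ with $\phi^i\in\mathcal C^1(\mathbb R^J)$; $n^i(x)$ the unit inward normal to $\partial G_i$; $\mathcal I(x)=\{i:x\in\partial G_i\}$; $n(x)=\{\sum_{i\in\mathcal I(x)}s_in^i(x):s_i\ge0\}$; $\gamma^i$ continuous vector fields on $\partial G_i$ with $\langle n^i,\gamma^i\rangle>0$; $d(x)=\{\sum_{i\in\mathcal I(x)}s_i\gamma^i(x):s_i\ge0\}$ for $x\in\partial G$. $\mathcal U=\{x\in\partial G:\exists n\in n(x),\ \langle n,d\rangle>0\ \forall d\in d(x)\setminus\{0\}\}$. Assumption 2': $\mathcal V\subset\partial G$ is finite with $\mathcal V\supset\partial G\setminus\mathcal U$, and for each $x\in\mathcal V$ there exist a unit vector $v_x$ and constants $r_x>0$, $\alpha_x>0$, $0<c^1_x<1<c^2_x<\infty$ such that, with $\Theta_x=\{z:\langle z,v_x\rangle\ge0\}$, for all $y\in\overline G\cap B_{r_x}(x)$: (1) $\langle v_x,y-x\rangle\ge\alpha_x|y-x|$;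 (2) $\gamma^i(y)\in\Theta_x$ for each $i\in\mathcal I(y)\subset\mathcal I(x)$; (3) for every $r\in(0,r_x/c^2_x)$, $\overline G\cap B_{c^1_xr}(x)\subseteq\{y\in\overline G\cap B_{r_x}(x):\mathrm{dist}(y,x+rv_x+\Theta_x)>0\}\subseteq\overline G\cap B_{c^2_xr}(x)$; (4) $v_x^Ta(y)v_x\ge\alpha_x$ for all $y\in B_{r_x}(x)$. *)

theory Defs
  imports "HOL-Analysis.Analysis"
begin

text \<open>Index set I(x) = {i in I : x in boundary G_i}, where boundary G_i = {phi_i = 0}.\<close>
definition active :: "'i set \<Rightarrow> ('i \<Rightarrow> 'a \<Rightarrow> real) \<Rightarrow> 'a \<Rightarrow> 'i set" where
  "active I \<phi> x = {i \<in> I. \<phi> i x = 0}"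

definition gen_cone :: "'i set \<Rightarrow> ('i \<Rightarrow> 'a::real_vector) \<Rightarrow> 'a set" where
  "gen_cone S w = {(\<Sum>i\<in>S. s i *\<^sub>R w i) | s. \<forall>i\<in>S. 0 \<le> s i}"

definition unit_normal :: "'a::real_normed_vector \<Rightarrow> 'a" where
  "unit_normal g = (1 / norm g) *\<^sub>R g"

definition normal_cone :: "'i set \<Rightarrow> ('i \<Rightarrow> 'a \<Rightarrow> real) \<Rightarrow> ('i \<Rightarrow> 'a \<Rightarrow> 'a::real_normed_vector) \<Rightarrow> 'a \<Rightarrow> 'a set" where
  "normal_cone I \<phi> D\<phi> x = gen_cone (active I \<phi> x) (\<lambda>i. unit_normal (D\<phi> i x))"

definition refl_cone :: "'i set \<Rightarrow> ('i \<Rightarrow> 'a \<Rightarrow> real) \<Rightarrow> ('i \<Rightarrow> 'a \<Rightarrow> 'a::real_vector) \<Rightarrow> 'a \<Rightarrow> 'a set" where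
  "refl_cone I \<phi> \<gamma> x = gen_cone (active I \<phi> x) (\<lambda>i. \<gamma> i x)"

definition good_set :: "'a::real_inner set \<Rightarrow> 'i set \<Rightarrow> ('i \<Rightarrow> 'a \<Rightarrow> real) \<Rightarrow> ('i \<Rightarrow> 'a \<Rightarrow> 'a)
    \<Rightarrow> ('i \<Rightarrow> 'a \<Rightarrow> 'a) \<Rightarrow> 'a set" where
  "good_set G I \<phi> D\<phi> \<gamma> = {x \<in> frontier G. \<exists>n\<in>normal_cone I \<phi> D\<phi> x.
      \<forall>d\<in>refl_cone I \<phi> \<gamma> x - {0}. 0 < inner n d}"

definition piecewise_C1_refl :: "'a::euclidean_space set \<Rightarrow> 'i set \<Rightarrow> ('i \<Rightarrow> 'a \<Rightarrow> real)
    \<Rightarrow> ('i \<Rightarrow> 'a \<Rightarrow> 'a) \<Rightarrow> ('i \<Rightarrow> 'a \<Rightarrow> 'a) \<Rightarrow> bool" where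
  "piecewise_C1_refl G I \<phi> D\<phi> \<gamma> \<longleftrightarrow>
     finite I \<and> G = (\<Inter>i\<in>I. {y. 0 < \<phi> i y}) \<and> G \<noteq> {} \<and> open G \<and> connected G \<and>
     (\<forall>i\<in>I. (\<forall>y. (\<phi> i has_derivative (\<lambda>h. inner (D\<phi> i y) h)) (at y))
            \<and> continuous_on UNIV (D\<phi> i)
            \<and> frontier {y. 0 < \<phi> i y} = {y. \<phi> i y = 0}
            \<and> (\<forall>y. \<phi> i y = 0 \<longrightarrow> D\<phi> i y \<noteq> 0)
            \<and> continuous_on {y. \<phi> i y = 0} (\<gamma> i)
            \<and> (\<forall>y. \<phi> i y = 0 \<longrightarrow> 0 < inner (unit_normal (D\<phi> i y)) (\<gamma> i y)))"

text \<open>Assumption 2'. a(y) = \<sigma>(y) \<sigma>(y)^T.\<close>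
definition assumption2' :: "(real^'J) set \<Rightarrow> 'i set \<Rightarrow> ('i \<Rightarrow> real^'J \<Rightarrow> real)
    \<Rightarrow> ('i \<Rightarrow> real^'J \<Rightarrow> real^'J) \<Rightarrow> ('i \<Rightarrow> real^'J \<Rightarrow> real^'J) \<Rightarrow> (real^'J \<Rightarrow> real^'N^'J)
    \<Rightarrow> (real^'J) set \<Rightarrow> (real^'J \<Rightarrow> real^'J) \<Rightarrow> (real^'J \<Rightarrow> real) \<Rightarrow> (real^'J \<Rightarrow> real)
    \<Rightarrow> (real^'J \<Rightarrow> real) \<Rightarrow> (real^'J \<Rightarrow> real) \<Rightarrow> bool" where
  "assumption2' G I \<phi> D\<phi> \<gamma> \<sigma> V v rr \<alpha> c1 c2 \<longleftrightarrow>
     finite V \<and> V \<subseteq> frontier G \<and> frontier G - good_set G I \<phi> D\<phi> \<gamma> \<subseteq> V \<and>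
     (\<forall>x\<in>V. norm (v x) = 1 \<and> 0 < rr x \<and> 0 < \<alpha> x \<and> 0 < c1 x \<and> c1 x < 1 \<and> 1 < c2 x \<and>
        (\<forall>y\<in>closure G \<inter> cball x (rr x). inner (v x) (y - x) \<ge> \<alpha> x * norm (y - x)) \<and>
        (\<forall>y\<in>closure G \<inter> cball x (rr x). active I \<phi> y \<subseteq> active I \<phi> x \<and>
             (\<forall>i\<in>active I \<phi> y. \<gamma> i y \<in> {z. 0 \<le> inner z (v x)})) \<and>
        (\<forall>r. 0 < r \<and> r < rr x / c2 x \<longrightarrow>
             closure G \<inter> cball x (c1 x * r)
               \<subseteq> {y \<in> closure G \<inter> cball x (rr x).
                    0 < infdist y ((\<lambda>z. x + r *\<^sub>R v x + z) ` {z. 0 \<le> inner z (v x)})}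
           \<and> {y \<in> closure G \<inter> cball x (rr x).
                    0 < infdist y ((\<lambda>z. x + r *\<^sub>R v x + z) ` {z. 0 \<le> inner z (v x)})}
               \<subseteq> closure G \<inter> cball x (c2 x * r)) \<and>
        (\<forall>y\<in>cball x (rr x). inner (v x) ((\<sigma> y ** transpose (\<sigma> y)) *v v x) \<ge> \<alpha> x))"

text \<open>g is C^2 on the open set U, with gradient Dg and Hessian Hg (Hg y $ i $ j = d^2 g / dy_j dy_i).\<close>
definition C2_on_with :: "(real^'J \<Rightarrow> real) \<Rightarrow> (real^'J \<Rightarrow> real^'J) \<Rightarrow> (real^'J \<Rightarrow> real^'J^'J)
    \<Rightarrow> (real^'J) set \<Rightarrow> bool" where
  "C2_on_with g Dg Hg U \<longleftrightarrow>
     (\<forall>y\<in>U. (g has_derivative (\<lambda>h. inner (Dg y) h)) (at y)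
           \<and> (Dg has_derivative (\<lambda>h. Hg y *v h)) (at y))
     \<and> continuous_on U Hg"

definition C2c_closure_with :: "(real^'J) set \<Rightarrow> (real^'J \<Rightarrow> real) \<Rightarrow> (real^'J \<Rightarrow> real^'J)
    \<Rightarrow> (real^'J \<Rightarrow> real^'J^'J) \<Rightarrow> bool" where
  "C2c_closure_with G g Dg Hg \<longleftrightarrow>
     (\<exists>U. open U \<and> closure G \<subseteq> U \<and> C2_on_with g Dg Hg U \<and>
          compact (closure {y \<in> U. g y \<noteq> 0}) \<and> closure {y \<in> U. g y \<noteq> 0} \<subseteq> U)"

end

theory Submission
  imports Defs
begin

lemma deriv_lr:
  fixes f :: "real \<Rightarrow> real"
  assumes "(f has_real_derivative D) (at_left x)" "(f has_real_derivative D) (at_right x)"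
  shows "(f has_real_derivative D) (at x)"
  using assms unfolding has_field_derivative_iff
  by (subst at_eq_sup_left_right) (simp add: filterlim_sup)

definition clamp :: "real \<Rightarrow> real" where "clamp t = max 0 (min 1 t)"

lemma deriv_ev:
  assumes "\<forall>\<^sub>F y in F. g y = f y" "g t = f t" "(g has_real_derivative D) (at t within S)"
    "F = at t within S" "D = E"
  shows "(f has_real_derivative E) (at t within S)"
  using has_field_derivative_cong_eventually[of g f t S D] assms by simp

lemma clamp_deriv:
  fixes P P' :: "real \<Rightarrow> real"
  assumes d: "\<And>t. (P has_real_derivative P' t) (at t)" and z: "P' 0 = 0" "P' 1 = 0"
  shows "((\<lambda>t. P (clamp t)) has_real_derivative P' (clamp t)) (at t)"
proof (rule deriv_lr)
  have c0: "((\<lambda>t. P 0) has_real_derivative 0) F" for F by simp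
  have c1: "((\<lambda>t. P 1) has_real_derivative 0) F" for F by simp
  have dw: "(P has_real_derivative P' t) (at t within S)" for S using d has_field_derivative_at_within by blast
  show "((\<lambda>t. P (clamp t)) has_real_derivative P' (clamp t)) (at_left t)"
  proof (cases "t \<le> 0")
    case True
    have ev: "\<forall>\<^sub>F y in at_left t. P 0 = P (clamp y)"
      unfolding eventually_at_filter using True by (auto simp: clamp_def)
    show ?thesis by (rule deriv_ev[OF ev _ c0]) (use True z in \<open>auto simp: clamp_def\<close>)
  next
    case False
    show ?thesis
    proof (cases "t \<le> 1")
      case True
      have ev: "\<forall>\<^sub>F y in at_left t. P y = P (clamp y)"
        using eventually_at_left_real[of 0 t] False True
        by (auto elim!: eventually_mono simp: clamp_def)
      show ?thesis by (rule deriv_ev[OF ev _ dw]) (use True False in \<open>auto simp: clamp_def\<close>)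
    next
      case F2: False
      have ev: "\<forall>\<^sub>F y in at_left t. P 1 = P (clamp y)"
        using eventually_at_left_real[of 1 t] False F2
        by (auto elim!: eventually_mono simp: clamp_def)
      show ?thesis by (rule deriv_ev[OF ev _ c1]) (use F2 False z in \<open>auto simp: clamp_def\<close>)
    qed
  qed
  show "((\<lambda>t. P (clamp t)) has_real_derivative P' (clamp t)) (at_right t)"
  proof (cases "t < 0")
    case True
    have ev: "\<forall>\<^sub>F y in at_right t. P 0 = P (clamp y)"
      using eventually_at_right_real[of t 0] True
      by (auto elim!: eventually_mono simp: clamp_def)
    show ?thesis by (rule deriv_ev[OF ev _ c0]) (use True z in \<open>auto simp: clamp_def\<close>)
  next
    case False
    show ?thesis
    proof (cases "t < 1")
      case True
      have ev: "\<forall>\<^sub>F y in at_right t. P y = P (clamp y)"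
        using eventually_at_right_real[of t 1] False True
        by (auto elim!: eventually_mono simp: clamp_def)
      show ?thesis by (rule deriv_ev[OF ev _ dw]) (use True False in \<open>auto simp: clamp_def\<close>)
    next
      case F2: False
      have ev: "\<forall>\<^sub>F y in at_right t. P 1 = P (clamp y)"
        unfolding eventually_at_filter using F2 by (auto simp: clamp_def)
      show ?thesis by (rule deriv_ev[OF ev _ c1]) (use F2 False z in \<open>auto simp: clamp_def\<close>)
    qed
  qed
qed

definition P0 :: "real \<Rightarrow> real" where "P0 t = 1 - 10*t^3 + 15*t^4 - 6*t^5"
definition P1 :: "real \<Rightarrow> real" where "P1 t = - 30*t^2 + 60*t^3 - 30*t^4"
definition P2 :: "real \<Rightarrow> real" where "P2 t = - 60*t + 180*t^2 - 120*t^3"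
definition P3 :: "real \<Rightarrow> real" where "P3 t = - 60 + 360*t - 360*t^2"

lemma P0_d: "(P0 has_real_derivative P1 t) (at t)"
  unfolding P0_def P1_def by (auto intro!: derivative_eq_intros simp: algebra_simps)
lemma P1_d: "(P1 has_real_derivative P2 t) (at t)"
  unfolding P2_def P1_def by (auto intro!: derivative_eq_intros simp: algebra_simps)

definition S0 :: "real \<Rightarrow> real" where "S0 t = P0 (clamp t)"
definition S1 :: "real \<Rightarrow> real" where "S1 t = P1 (clamp t)"
definition S2 :: "real \<Rightarrow> real" where "S2 t = P2 (clamp t)"

lemma S0_d: "(S0 has_real_derivative S1 t) (at t)"
  unfolding S0_def[abs_def] S1_def by (rule clamp_deriv[OF P0_d]) (auto simp: P1_def)
lemma S1_d: "(S1 has_real_derivative S2 t) (at t)"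
  unfolding S1_def[abs_def] S2_def by (rule clamp_deriv[OF P1_d]) (auto simp: P2_def)

lemma S0_cont[continuous_intros]: "continuous_on A q \<Longrightarrow> continuous_on A (\<lambda>y. S0 (q y))"
  unfolding S0_def P0_def clamp_def by (intro continuous_intros)
lemma S1_cont[continuous_intros]: "continuous_on A q \<Longrightarrow> continuous_on A (\<lambda>y. S1 (q y))"
  unfolding S1_def P1_def clamp_def by (intro continuous_intros)
lemma S2_cont[continuous_intros]: "continuous_on A q \<Longrightarrow> continuous_on A (\<lambda>y. S2 (q y))"
  unfolding S2_def P2_def clamp_def by (intro continuous_intros)

lemma clamp_range: "0 \<le> clamp t" "clamp t \<le> 1" by (auto simp: clamp_def)

lemma S_low: "t \<le> 0 \<Longrightarrow> S0 t = 1 \<and> S1 t = 0 \<and> S2 t = 0"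
  by (simp add: S0_def S1_def S2_def P0_def P1_def P2_def clamp_def)
lemma S_high: "1 \<le> t \<Longrightarrow> S0 t = 0 \<and> S1 t = 0 \<and> S2 t = 0"
  by (simp add: S0_def S1_def S2_def P0_def P1_def P2_def clamp_def)

lemma S0_bounds: "0 \<le> S0 t" "S0 t \<le> 1"
proof -
  define c where "c = clamp t"
  have c: "0 \<le> c" "c \<le> 1" using clamp_range c_def by auto
  have e1: "P0 c = (1-c)^3 * (1 + 3*c + 6*c^2)" unfolding P0_def by algebra
  show "0 \<le> S0 t" unfolding S0_def c_def[symmetric] e1 using c by (intro mult_nonneg_nonneg) auto
  have e2: "P0 c = 1 - c^3 * (10 - 15*c + 6*c^2)" unfolding P0_def by algebra
  have q: "10 - 15*c + 6*c^2 = 6*(c - 5/4)^2 + 5/8" by algebra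
  have "0 \<le> 10 - 15*c + 6*c^2" unfolding q by simp
  then have "0 \<le> c^3 * (10 - 15*c + 6*c^2)" using c by simp
  then show "S0 t \<le> 1" unfolding S0_def c_def[symmetric] e2 by simp
qed

lemma S1_bounds: "S1 t \<le> 0" "\<bar>S1 t\<bar> \<le> 30"
proof -
  define c where "c = clamp t"
  have c: "0 \<le> c" "c \<le> 1" using clamp_range c_def by auto
  have e1: "P1 c = - 30 * (c * (1-c))^2" unfolding P1_def by algebra
  have "c * (1-c) \<le> 1" "0 \<le> c * (1-c)" using c by (auto intro: mult_le_one)
  then have "(c * (1-c))^2 \<le> 1" by (simp add: power_le_one)
  then show "S1 t \<le> 0" "\<bar>S1 t\<bar> \<le> 30" unfolding S1_def c_def[symmetric] e1 by auto
qed

lemma S2_bound: "\<bar>S2 t\<bar> \<le> 60"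
proof -
  define c where "c = clamp t"
  have c: "0 \<le> c" "c \<le> 1" using clamp_range c_def by auto
  have e1: "P2 c = - 60 * (c * ((1-c) * (1 - 2*c)))" unfolding P2_def by algebra
  have a: "\<bar>c\<bar> \<le> 1" "\<bar>1-c\<bar> \<le> 1" "\<bar>1-2*c\<bar> \<le> 1" using c by auto
  have "\<bar>c * ((1-c) * (1 - 2*c))\<bar> \<le> 1" unfolding abs_mult using a
    by (intro mult_le_one) (auto intro: mult_nonneg_nonneg)
  then show ?thesis unfolding S2_def c_def[symmetric] e1 by (simp add: abs_mult)
qed

definition outer :: "real^'n \<Rightarrow> real^'n \<Rightarrow> real^'n^'n" where
  "outer a b = (\<chi> i j. a$i * b$j)"

lemma outer_mult: "outer a b *v h = inner b h *\<^sub>R a"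
  by (simp add: outer_def vec_eq_iff matrix_vector_mult_def inner_vec_def sum_distrib_right
      sum_distrib_left algebra_simps)

lemma outer_cont[continuous_intros]: "continuous_on A f \<Longrightarrow> continuous_on A g \<Longrightarrow>
   continuous_on A (\<lambda>y. outer (f y) (g y))"
  unfolding outer_def by (intro continuous_intros)

lemma L_chain:
  fixes q :: "real^'n \<Rightarrow> real"
  assumes "(S has_real_derivative D) (at (q y))" "(q has_derivative (\<lambda>h. inner u h)) (at y)"
  shows "((\<lambda>y. S (q y)) has_derivative (\<lambda>h. inner (D *\<^sub>R u) h)) (at y)"
  using has_derivative_compose[OF assms(2) assms(1)[unfolded has_field_derivative_def]]
  by (simp add: ac_simps)

lemma L_mult:
  fixes f g :: "real^'n \<Rightarrow> real"
  assumes "(f has_derivative (\<lambda>h. inner a h)) (at y)" "(g has_derivative (\<lambda>h. inner b h)) (at y)"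
  shows "((\<lambda>y. f y * g y) has_derivative (\<lambda>h. inner (f y *\<^sub>R b + g y *\<^sub>R a) h)) (at y)"
  using has_derivative_mult[OF assms]
  by (simp add: algebra_simps inner_add_left)

lemma L_scale:
  fixes \<alpha> :: "real^'n \<Rightarrow> real" and W :: "real^'n \<Rightarrow> real^'n"
  assumes "(\<alpha> has_derivative (\<lambda>h. inner a h)) (at y)" "(W has_derivative (\<lambda>h. M *v h)) (at y)"
  shows "((\<lambda>y. \<alpha> y *\<^sub>R W y) has_derivative (\<lambda>h. (\<alpha> y *\<^sub>R M + outer (W y) a) *v h)) (at y)"
proof -
  have e: "(\<alpha> y *\<^sub>R M + outer (W y) a) *v h = \<alpha> y *\<^sub>R (M *v h) + inner a h *\<^sub>R W y" for h
    by (simp only: matrix_vector_mult_add_rdistrib outer_mult scaleR_matrix_vector_assoc)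
  show ?thesis unfolding e by (rule has_derivative_scaleR[OF assms])
qed


lemma outer_zero[simp]: "outer 0 b = 0" "outer a 0 = 0"
  by (simp_all add: outer_def vec_eq_iff)

theorem propositionA4:
  fixes G :: "(real^'J) set" and I :: "'i set" and \<phi> :: "'i \<Rightarrow> real^'J \<Rightarrow> real"
    and D\<phi> \<gamma> :: "'i \<Rightarrow> real^'J \<Rightarrow> real^'J" and \<sigma> :: "real^'J \<Rightarrow> real^'N^'J"
    and V :: "(real^'J) set" and v :: "real^'J \<Rightarrow> real^'J"
    and rr \<alpha> c1 c2 :: "real^'J \<Rightarrow> real"
  assumes "continuous_on UNIV \<sigma>"
    and "piecewise_C1_refl G I \<phi> D\<phi> \<gamma>"
    and "assumption2' G I \<phi> D\<phi> \<gamma> \<sigma> V v rr \<alpha> c1 c2"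
  shows "\<forall>x\<in>V. \<exists>A::real. \<forall>r. 0 < r \<and> r < rr x / c2 x \<longrightarrow>
           (\<exists>g Dg Hg. C2c_closure_with G g Dg Hg \<and> (\<forall>y\<in>closure G. 0 \<le> g y) \<and>
              closure {y. g y \<noteq> 0} \<inter> closure G \<subseteq> cball x (c2 x * r) \<inter> closure G \<and>
              cball x (c2 x * r) \<inter> closure G \<subseteq> cball x (rr x) \<inter> closure G \<and>
              (\<forall>y\<in>cball x (c1 x * r) \<inter> closure G. g y = 1) \<and>
              (\<forall>y\<in>closure G. \<bar>g y\<bar> \<le> A) \<and>
              (\<forall>y\<in>closure G. norm (Dg y) \<le> A / r) \<and>
              (\<exists>B < A / r\<^sup>2. \<forall>y\<in>closure G. (\<Sum>i\<in>UNIV. \<Sum>j\<in>UNIV. \<bar>Hg y $ i $ j\<bar>) \<le> B) \<and>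
              (\<forall>y\<in>frontier G. \<forall>d\<in>refl_cone I \<phi> \<gamma> y. inner d (Dg y) \<le> 0))"
proof
  fix x assume xV: "x \<in> V"
  have nv: "norm (v x) = 1" and rpos: "0 < rr x" and c1p: "0 < c1 x" and c1l: "c1 x < 1"
    and c2g: "1 < c2 x"
    using assms(3) xV unfolding assumption2'_def by blast+
  have refl: "\<And>y i. y \<in> closure G \<Longrightarrow> y \<in> cball x (rr x) \<Longrightarrow> i \<in> active I \<phi> y \<Longrightarrow>
      0 \<le> inner (\<gamma> i y) (v x)"
    using assms(3) xV unfolding assumption2'_def by blast
  have sand: "\<And>r. 0 < r \<Longrightarrow> r < rr x / c2 x \<Longrightarrow>
      {y \<in> closure G \<inter> cball x (rr x).
                    0 < infdist y ((\<lambda>z. x + r *\<^sub>R v x + z) ` {z. 0 \<le> inner z (v x)})}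
               \<subseteq> closure G \<inter> cball x (c2 x * r)"
    using assms(3) xV unfolding assumption2'_def by blast
  have vv: "inner (v x) (v x) = 1" using nv by (simp add: dot_square_norm)
  have middle: "y \<in> cball x (c2 x * r)"
    if r: "0 < r" "r < rr x / c2 x" and y: "y \<in> closure G" "dist x y \<le> rr x"
       and lt: "inner (v x) (y - x) < r" for r y
  proof -
    let ?H = "(\<lambda>z. x + r *\<^sub>R v x + z) ` {z. 0 \<le> inner z (v x)}"
    have cl: "closed ?H"
      by (rule closed_translation) (auto intro!: closed_Collect_le continuous_intros)
    have "0 \<in> {z. 0 \<le> inner z (v x)}" by simp
    then have ne: "?H \<noteq> {}" by blast
    have nin: "y \<notin> ?H"
    proof
      assume "y \<in> ?H"
      then obtain z where z: "0 \<le> inner z (v x)" "y = x + r *\<^sub>R v x + z" by auto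
      then have "inner (v x) (y - x) = r + inner z (v x)"
        by (simp add: inner_add_right vv inner_commute)
      with z lt show False by simp
    qed
    have "0 < infdist y ?H" by (rule infdist_pos_not_in_closed[OF cl ne nin])
    then show ?thesis using sand[OF r] y by auto
  qed
  define \<kappa> where "\<kappa> = (1 - c1 x) / 2"
  have kp: "0 < \<kappa>" using c1l by (simp add: \<kappa>_def)
  define n where "n = real CARD('J)"
  define A where "A = 30 / \<kappa> + 60 * n * n / \<kappa>^2 + 1"
  show "\<exists>A::real. \<forall>r. 0 < r \<and> r < rr x / c2 x \<longrightarrow>
           (\<exists>g Dg Hg. C2c_closure_with G g Dg Hg \<and> (\<forall>y\<in>closure G. 0 \<le> g y) \<and>
              closure {y. g y \<noteq> 0} \<inter> closure G \<subseteq> cball x (c2 x * r) \<inter> closure G \<and>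
              cball x (c2 x * r) \<inter> closure G \<subseteq> cball x (rr x) \<inter> closure G \<and>
              (\<forall>y\<in>cball x (c1 x * r) \<inter> closure G. g y = 1) \<and>
              (\<forall>y\<in>closure G. \<bar>g y\<bar> \<le> A) \<and>
              (\<forall>y\<in>closure G. norm (Dg y) \<le> A / r) \<and>
              (\<exists>B < A / r\<^sup>2. \<forall>y\<in>closure G. (\<Sum>i\<in>UNIV. \<Sum>j\<in>UNIV. \<bar>Hg y $ i $ j\<bar>) \<le> B) \<and>
              (\<forall>y\<in>frontier G. \<forall>d\<in>refl_cone I \<phi> \<gamma> y. inner d (Dg y) \<le> 0))"
  proof (intro exI[of _ A] allI impI)
    fix r assume "0 < r \<and> r < rr x / c2 x"
    then have rp: "0 < r" and rl: "r < rr x / c2 x" by auto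
    have c2r: "c2 x * r < rr x" using rl c2g by (simp add: pos_less_divide_eq mult.commute)
    define \<rho> where "\<rho> = (c2 x * r + rr x) / 2"
    have \<rho>1: "c2 x * r < \<rho>" "\<rho> < rr x" "0 < \<rho>"
    proof -
      have "0 < c2 x * r" using c2g rp by simp
      then show "c2 x * r < \<rho>" unfolding \<rho>_def using c2r by argo
      show "\<rho> < rr x" unfolding \<rho>_def using c2r by argo
      show "0 < \<rho>" unfolding \<rho>_def using c2r \<open>0 < c2 x * r\<close> by argo
    qed
    define a where "a = 1 / (r * \<kappa>)"
    define b where "b = - c1 x / \<kappa>"
    have ap: "0 < a" using rp kp by (simp add: a_def)
    define e where "e = 1 / ((rr x)^2 - \<rho>^2)"
    define f where "f = - (\<rho>^2) * e"
    have ep: "0 < e" using \<rho>1 unfolding e_def by (simp add: power_strict_mono)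
    define ell where "ell = (\<lambda>y. a * inner (v x) (y - x) + b)"
    define m where "m = (\<lambda>y. e * inner (y - x) (y - x) + f)"
    define wv where "wv = a *\<^sub>R v x"
    define u where "u = (\<lambda>y. (2 * e) *\<^sub>R (y - x))"
    define g where "g = (\<lambda>y. S0 (ell y) * S0 (m y))"
    define W1 where "W1 = (\<lambda>y. S1 (m y) *\<^sub>R u y)"
    define W2 where "W2 = (\<lambda>y. S1 (ell y) *\<^sub>R wv)"
    define Dg where "Dg = (\<lambda>y. S0 (ell y) *\<^sub>R W1 y + S0 (m y) *\<^sub>R W2 y)"
    define M1 where "M1 = (\<lambda>y. S1 (m y) *\<^sub>R ((2 * e) *\<^sub>R mat 1) + outer (u y) (S2 (m y) *\<^sub>R u y))"
    define M2 where "M2 = (\<lambda>y. S1 (ell y) *\<^sub>R (0::real^'J^'J) + outer wv (S2 (ell y) *\<^sub>R wv))"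
    define Hg where "Hg = (\<lambda>y. (S0 (ell y) *\<^sub>R M1 y + outer (W1 y) (S1 (ell y) *\<^sub>R wv))
                           + (S0 (m y) *\<^sub>R M2 y + outer (W2 y) (S1 (m y) *\<^sub>R u y)))"
    have dell: "(ell has_derivative (\<lambda>h. inner wv h)) (at y)" for y
      unfolding ell_def wv_def
      by (rule has_derivative_eq_rhs, (rule derivative_intros)+) (auto simp: inner_commute)
    have dm: "(m has_derivative (\<lambda>h. inner (u y) h)) (at y)" for y
      unfolding m_def u_def
      by (rule has_derivative_eq_rhs, (rule derivative_intros)+)
         (auto simp: inner_commute inner_diff_right algebra_simps fun_eq_iff)
    have du: "(u has_derivative (\<lambda>h. ((2 * e) *\<^sub>R mat 1) *v h)) (at y)" for y
      unfolding u_def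
      by (rule has_derivative_eq_rhs, (rule derivative_intros)+)
         (auto simp: fun_eq_iff scaleR_matrix_vector_assoc[symmetric])
    have dwv: "((\<lambda>y. wv) has_derivative (\<lambda>h. (0::real^'J^'J) *v h)) (at y)" for y
      by simp
    have dg: "(g has_derivative (\<lambda>h. inner (Dg y) h)) (at y)" for y
      using L_mult[OF L_chain[OF S0_d dell] L_chain[OF S0_d dm]]
      unfolding g_def Dg_def W1_def W2_def by (simp add: algebra_simps)
    have dW1: "(W1 has_derivative (\<lambda>h. M1 y *v h)) (at y)" for y
      unfolding W1_def M1_def by (rule L_scale[OF L_chain[OF S1_d dm] du])
    have dW2: "(W2 has_derivative (\<lambda>h. M2 y *v h)) (at y)" for y
      unfolding W2_def M2_def by (rule L_scale[OF L_chain[OF S1_d dell] dwv])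
    have dDg: "(Dg has_derivative (\<lambda>h. Hg y *v h)) (at y)" for y
    proof -
      have "(Dg has_derivative (\<lambda>h. (S0 (ell y) *\<^sub>R M1 y + outer (W1 y) (S1 (ell y) *\<^sub>R wv)) *v h
              + (S0 (m y) *\<^sub>R M2 y + outer (W2 y) (S1 (m y) *\<^sub>R u y)) *v h)) (at y)"
        unfolding Dg_def
        by (intro has_derivative_add L_scale[OF L_chain[OF S0_d dell] dW1] L_scale[OF L_chain[OF S0_d dm] dW2])
      then show ?thesis unfolding Hg_def by (simp add: matrix_vector_mult_add_rdistrib)
    qed
    have cell: "continuous_on UNIV ell" unfolding ell_def by (intro continuous_intros)
    have cm: "continuous_on UNIV m" unfolding m_def by (intro continuous_intros)
    have cu: "continuous_on UNIV u" unfolding u_def by (intro continuous_intros)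
    have cH: "continuous_on UNIV Hg"
      unfolding Hg_def M1_def M2_def W1_def W2_def
      by (intro continuous_intros cell cm cu)
    have g01: "0 \<le> g y" "g y \<le> 1" for y
      unfolding g_def using S0_bounds[of "ell y"] S0_bounds[of "m y"]
      by (auto intro: mult_le_one)
    have m_le0: "m y \<le> 0 \<longleftrightarrow> norm (y - x) \<le> \<rho>" for y
    proof -
      have "m y = e * ((norm (y - x))^2 - \<rho>^2)"
        by (simp add: m_def f_def power2_norm_eq_inner algebra_simps)
      then have "m y \<le> 0 \<longleftrightarrow> (norm (y - x))^2 \<le> \<rho>^2" using ep
        by (simp add: mult_le_0_iff)
      also have "\<dots> \<longleftrightarrow> norm (y - x) \<le> \<rho>" using \<rho>1 by (simp add: power2_le_iff_abs_le)
      finally show ?thesis .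
    qed
    have m_ge1: "1 \<le> m y \<longleftrightarrow> rr x \<le> norm (y - x)" for y
    proof -
      have "m y = e * ((norm (y - x))^2 - \<rho>^2)"
        by (simp add: m_def f_def power2_norm_eq_inner algebra_simps)
      moreover have "e * ((rr x)^2 - \<rho>^2) = 1" using \<rho>1 unfolding e_def
        by (simp add: power_strict_mono)
      ultimately have "1 \<le> m y \<longleftrightarrow> e * ((rr x)^2 - \<rho>^2) \<le> e * ((norm (y - x))^2 - \<rho>^2)" by simp
      also have "\<dots> \<longleftrightarrow> (rr x)^2 \<le> (norm (y - x))^2" using ep by simp
      also have "\<dots> \<longleftrightarrow> rr x \<le> norm (y - x)" using rpos by (simp add: power2_le_iff_abs_le)
      finally show ?thesis .
    qed
    have l_lt1: "ell y < 1 \<longleftrightarrow> inner (v x) (y - x) < (c1 x + \<kappa>) * r" for y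
    proof -
      have "ell y = (inner (v x) (y - x) - c1 x * r) / (r * \<kappa>)"
        using rp kp by (simp add: ell_def a_def b_def field_simps)
      then show ?thesis using rp kp by (simp add: pos_divide_less_eq algebra_simps)
    qed
    have l_le0: "ell y \<le> 0 \<longleftrightarrow> inner (v x) (y - x) \<le> c1 x * r" for y
    proof -
      have "ell y = (inner (v x) (y - x) - c1 x * r) / (r * \<kappa>)"
        using rp kp by (simp add: ell_def a_def b_def field_simps)
      moreover have "0 < r * \<kappa>" using rp kp by simp
      ultimately show ?thesis by (simp add: divide_le_0_iff)
    qed
    have ck: "c1 x + \<kappa> < 1" unfolding \<kappa>_def using c1l by argo
    have cr: "(c1 x + \<kappa>) * r < r" using mult_strict_right_mono[OF ck rp] by simp
    have split: "(m y \<le> 0 \<and> norm (y - x) \<le> \<rho>) \<or> (Dg y = 0 \<and> Hg y = 0)"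
      if y: "y \<in> closure G" for y
    proof (cases "m y \<le> 0")
      case True then show ?thesis using m_le0 by blast
    next
      case False
      have "1 \<le> ell y \<or> 1 \<le> m y"
      proof (rule ccontr)
        assume "\<not> ?thesis"
        then have "ell y < 1" "m y < 1" by auto
        then have in1: "inner (v x) (y - x) < r" "norm (y - x) < rr x"
          using l_lt1[of y] m_ge1[of y] cr by auto
        have "y \<in> cball x (c2 x * r)"
          using middle[OF rp rl y _ in1(1)] in1(2) by (simp add: dist_norm norm_minus_commute)
        moreover have "\<rho> < norm (y - x)" using False m_le0 by simp
        ultimately show False using \<rho>1 by (simp add: dist_norm norm_minus_commute)
      qed
      then show ?thesis
      proof
        assume "1 \<le> ell y"
        then have "S0 (ell y) = 0" "S1 (ell y) = 0" "S2 (ell y) = 0" using S_high by auto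
        then show ?thesis by (simp add: Dg_def Hg_def W1_def W2_def M2_def)
      next
        assume "1 \<le> m y"
        then have "S0 (m y) = 0" "S1 (m y) = 0" "S2 (m y) = 0" using S_high by auto
        then show ?thesis by (simp add: Dg_def Hg_def W1_def W2_def M1_def)
      qed
    qed
    have low: "Dg y = S1 (ell y) *\<^sub>R wv \<and> Hg y = outer wv (S2 (ell y) *\<^sub>R wv)" if "m y \<le> 0" for y
    proof -
      have "S0 (m y) = 1" "S1 (m y) = 0" "S2 (m y) = 0" using S_low that by auto
      then show ?thesis by (simp add: Dg_def Hg_def W1_def W2_def M1_def M2_def)
    qed
    have wvc: "\<bar>wv $ i\<bar> \<le> a" for i
      using component_le_norm_cart[of "v x" i] nv ap by (simp add: wv_def abs_mult)
    have nwv: "norm wv = a" using nv ap by (simp add: wv_def)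
    define B where "B = 60 * n * n * a^2"
    have AB: "B < A / r^2"
    proof -
      have "B = (60 * n * n / \<kappa>^2) / r^2" using rp kp by (simp add: B_def a_def field_simps)
      also have "\<dots> < A / r^2" using rp kp unfolding A_def
        by (intro divide_strict_right_mono) (auto intro!: add_pos_nonneg)
      finally show ?thesis .
    qed
    have A1: "1 \<le> A"
    proof -
      have "0 < 30 / \<kappa>" "0 \<le> 60 * n * n / \<kappa>^2" using kp by (auto simp: n_def)
      then show "1 \<le> A" unfolding A_def by linarith
    qed
    have Abig: "30 / \<kappa> \<le> A" unfolding A_def using kp by (simp add: n_def)
    show "\<exists>g Dg Hg. C2c_closure_with G g Dg Hg \<and> (\<forall>y\<in>closure G. 0 \<le> g y) \<and>
              closure {y. g y \<noteq> 0} \<inter> closure G \<subseteq> cball x (c2 x * r) \<inter> closure G \<and>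
              cball x (c2 x * r) \<inter> closure G \<subseteq> cball x (rr x) \<inter> closure G \<and>
              (\<forall>y\<in>cball x (c1 x * r) \<inter> closure G. g y = 1) \<and>
              (\<forall>y\<in>closure G. \<bar>g y\<bar> \<le> A) \<and>
              (\<forall>y\<in>closure G. norm (Dg y) \<le> A / r) \<and>
              (\<exists>B < A / r\<^sup>2. \<forall>y\<in>closure G. (\<Sum>i\<in>UNIV. \<Sum>j\<in>UNIV. \<bar>Hg y $ i $ j\<bar>) \<le> B) \<and>
              (\<forall>y\<in>frontier G. \<forall>d\<in>refl_cone I \<phi> \<gamma> y. inner d (Dg y) \<le> 0)"
    proof (intro exI[of _ g] exI[of _ Dg] exI[of _ Hg] conjI ballI)
      have supp: "{y. g y \<noteq> 0} \<subseteq> {y. inner (v x) (y - x) \<le> (c1 x + \<kappa>) * r} \<inter> cball x (rr x)"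
      proof
        fix y assume "y \<in> {y. g y \<noteq> 0}"
        then have "S0 (ell y) \<noteq> 0" "S0 (m y) \<noteq> 0" by (auto simp: g_def)
        then have "ell y < 1" "m y < 1"
          using S_high[of "ell y"] S_high[of "m y"] by (meson not_le)+
        then have "inner (v x) (y - x) < (c1 x + \<kappa>) * r" "norm (y - x) < rr x"
          using l_lt1[of y] m_ge1[of y] by auto
        then show "y \<in> {y. inner (v x) (y - x) \<le> (c1 x + \<kappa>) * r} \<inter> cball x (rr x)"
          by (auto simp: dist_norm norm_minus_commute)
      qed
      have clK: "closed ({y. inner (v x) (y - x) \<le> (c1 x + \<kappa>) * r} \<inter> cball x (rr x))"
        by (intro closed_Int closed_Collect_le continuous_intros closed_cball)
      have csupp: "closure {y. g y \<noteq> 0} \<subseteq> {y. inner (v x) (y - x) \<le> (c1 x + \<kappa>) * r} \<inter> cball x (rr x)"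
        by (rule closure_minimal[OF supp clK])
      show "C2c_closure_with G g Dg Hg"
        unfolding C2c_closure_with_def C2_on_with_def
      proof (intro exI[of _ UNIV] conjI ballI)
        have "bounded {y. g y \<noteq> 0}" using supp bounded_cball bounded_subset by blast
        then show "compact (closure {y \<in> UNIV. g y \<noteq> 0})" by (simp add: compact_closure)
      qed (auto simp: dg dDg cH)
      show "0 \<le> g y" for y by (rule g01)
      show "closure {y. g y \<noteq> 0} \<inter> closure G \<subseteq> cball x (c2 x * r) \<inter> closure G"
      proof
        fix y assume y: "y \<in> closure {y. g y \<noteq> 0} \<inter> closure G"
        then have "inner (v x) (y - x) \<le> (c1 x + \<kappa>) * r" "dist x y \<le> rr x" using csupp by auto
        moreover have "(c1 x + \<kappa>) * r < r" using ck rp by simp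
        ultimately show "y \<in> cball x (c2 x * r) \<inter> closure G" using middle[OF rp rl] y by auto
      qed
      show "cball x (c2 x * r) \<inter> closure G \<subseteq> cball x (rr x) \<inter> closure G"
        using c2r by auto
      show "g y = 1" if "y \<in> cball x (c1 x * r) \<inter> closure G" for y
      proof -
        have d: "norm (y - x) \<le> c1 x * r" using that by (simp add: dist_norm norm_minus_commute)
        have "inner (v x) (y - x) \<le> norm (v x) * norm (y - x)" by (rule norm_cauchy_schwarz)
        then have "ell y \<le> 0" using l_le0 d nv by simp
        moreover have "c1 x * r \<le> c2 x * r" using c1l c2g rp by simp
        then have "m y \<le> 0" using m_le0 d \<rho>1 by simp
        ultimately show ?thesis using S_low[of "ell y"] S_low[of "m y"] by (simp add: g_def)
      qed
      show "\<bar>g y\<bar> \<le> A" for y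
        using g01[of y] A1 by simp
      show "norm (Dg y) \<le> A / r" if y: "y \<in> closure G" for y
        using split[OF y]
      proof
        assume "m y \<le> 0 \<and> norm (y - x) \<le> \<rho>"
        then have "norm (Dg y) = \<bar>S1 (ell y)\<bar> * a" using low nwv by simp
        also have "\<dots> \<le> 30 * a" using S1_bounds ap by (intro mult_right_mono) auto
        also have "\<dots> = (30 / \<kappa>) / r" by (simp add: a_def)
        also have "\<dots> \<le> A / r" by (rule divide_right_mono[OF Abig]) (use rp in simp)
        finally show ?thesis .
      next
        assume "Dg y = 0 \<and> Hg y = 0"
        then show ?thesis using A1 rp by simp
      qed
      show "\<exists>B < A / r\<^sup>2. \<forall>y\<in>closure G. (\<Sum>i\<in>UNIV. \<Sum>j\<in>UNIV. \<bar>Hg y $ i $ j\<bar>) \<le> B"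
      proof (intro exI[of _ B] conjI ballI)
        show "B < A / r\<^sup>2" by (rule AB)
        fix y assume y: "y \<in> closure G"
        have B0: "0 \<le> B" by (simp add: B_def n_def)
        show "(\<Sum>i\<in>UNIV. \<Sum>j\<in>UNIV. \<bar>Hg y $ i $ j\<bar>) \<le> B"
          using split[OF y]
        proof
          assume "m y \<le> 0 \<and> norm (y - x) \<le> \<rho>"
          then have H: "Hg y $ i $ j = wv $ i * (S2 (ell y) * wv $ j)" for i j
            using low by (simp add: outer_def)
          have t: "\<bar>Hg y $ i $ j\<bar> \<le> 60 * a^2" for i j
          proof -
            have "\<bar>Hg y $ i $ j\<bar> = \<bar>wv $ i\<bar> * (\<bar>S2 (ell y)\<bar> * \<bar>wv $ j\<bar>)" by (simp add: H abs_mult)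
            also have "\<dots> \<le> a * (60 * a)" using wvc S2_bound ap
              by (intro mult_mono) (auto intro: mult_mono)
            finally show ?thesis by (simp add: power2_eq_square)
          qed
          have "(\<Sum>i\<in>UNIV. \<Sum>j\<in>UNIV. \<bar>Hg y $ i $ j\<bar>) \<le> (\<Sum>i\<in>(UNIV::'J set). n * (60 * a^2))"
          proof (intro sum_mono)
            fix i :: 'J
            show "(\<Sum>j\<in>UNIV. \<bar>Hg y $ i $ j\<bar>) \<le> n * (60 * a^2)"
              using sum_bounded_above[of "UNIV::'J set" "\<lambda>j. \<bar>Hg y $ i $ j\<bar>" "60*a^2"] t
              by (simp add: n_def)
          qed
          also have "\<dots> = B" by (simp add: B_def n_def)
          finally show ?thesis .
        next
          assume "Dg y = 0 \<and> Hg y = 0"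
          then show ?thesis using B0 by simp
        qed
      qed
      show "inner d (Dg y) \<le> 0" if y: "y \<in> frontier G" and d: "d \<in> refl_cone I \<phi> \<gamma> y" for y d
      proof -
        have yc: "y \<in> closure G" using y by (simp add: frontier_def)
        show ?thesis using split[OF yc]
        proof
          assume h: "m y \<le> 0 \<and> norm (y - x) \<le> \<rho>"
          then have yb: "y \<in> cball x (rr x)" using \<rho>1 by (simp add: dist_norm norm_minus_commute)
          obtain s where s: "\<forall>i\<in>active I \<phi> y. 0 \<le> s i" "d = (\<Sum>i\<in>active I \<phi> y. s i *\<^sub>R \<gamma> i y)"
            using d unfolding refl_cone_def gen_cone_def by blast
          have "0 \<le> inner d (v x)" unfolding s(2) inner_sum_left
            using s(1) refl[OF yc yb] by (auto intro!: sum_nonneg mult_nonneg_nonneg)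
          moreover have "inner d (Dg y) = S1 (ell y) * (a * inner d (v x))"
            using low h by (simp add: wv_def)
          ultimately show ?thesis using S1_bounds(1) ap
            by (simp add: mult_nonpos_nonneg)
        next
          assume "Dg y = 0 \<and> Hg y = 0"
          then show ?thesis by simp
        qed
      qed
    qed
  qed
qed

end
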